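(* Let $1\le k\le n$ and $\lambda_0,\dots,\lambda_n\in\mathbb R$. The set of real solutions $(a_0,\dots,a_n)$ of the linear system $$\sum_{i=0}^n a_{i}\frac{\binom{k}{s}\binom{n-k}{i-s}}{\binom{n}{i}}=\sum_{i=0}^n\lambda_i\frac{\binom{k}{s}\binom{n-k}{i-s}}{\binom{n}{i}},\qquad 0\le s\le k,$$ is exactly the set of vectors of the form $$a_r=\sum_{i=k+1}^n(-1)^{k-r+1}\binom{i}{k}\binom{k}{r}\frac{i-k}{i-r}\,s_i+\lambda_r\quad(0\le r\le k),\qquad a_r=s_r+\lambda_r\quad(k+1\le r\le n),$$ with $s_{k+1},\dots,s_n\in\mathbb R$ arbitrary.
   Context: Convention: $\binom{m}{i}=0$ if $i<0$ or $i>m$. *)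

theory Defs
  imports Complex_Main
begin

definition binom_int :: "nat \<Rightarrow> int \<Rightarrow> nat" where
  "binom_int m i = (if i < 0 then 0 else m choose (nat i))"

end

theory Submission
  imports Defs "HOL-Computational_Algebra.Polynomial"
begin


lemma lagrange_nat_nodes:
  fixes p :: "real poly" and k :: nat
  assumes "degree p \<le> k"
  shows "poly p x = (\<Sum>r=0..k. poly p (real r) * (\<Prod>m\<in>{0..k}-{r}. (x - real m)/(real r - real m)))"
proof -
  define L where "L r = smult (1 / (\<Prod>m\<in>{0..k}-{r}. (real r - real m))) (\<Prod>m\<in>{0..k}-{r}. [:-real m, 1:])" for r
  have polyL: "poly (L r) y = (\<Prod>m\<in>{0..k}-{r}. (y - real m)/(real r - real m))" for r y
    by (simp add: L_def poly_prod prod_dividef)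
  define q where "q = (\<Sum>r=0..k. smult (poly p (real r)) (L r))"
  have polyq: "poly q y = (\<Sum>r=0..k. poly p (real r) * (\<Prod>m\<in>{0..k}-{r}. (y - real m)/(real r - real m)))" for y
    by (simp add: q_def poly_sum polyL)
  have degL: "degree (L r) \<le> k" if "r \<le> k" for r
  proof -
    have "degree (L r) \<le> degree (\<Prod>m\<in>{0..k}-{r}. [:-real m, 1:])"
      unfolding L_def by (rule degree_smult_le)
    also have "\<dots> \<le> sum (degree \<circ> (\<lambda>m. [:-real m, 1:])) ({0..k}-{r})"
      by (rule degree_prod_sum_le) simp
    also have "\<dots> = card ({0..k}-{r})" by simp
    also have "\<dots> \<le> k" using that by simp
    finally show ?thesis .
  qed
  have degq: "degree q \<le> k"
    unfolding q_def
    by (rule degree_sum_le) (auto intro: order_trans[OF degree_smult_le] degL)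
  have nodes: "poly p y = poly q y" if yin: "y \<in> real ` {0..k}" for y
  proof -
    obtain j where j: "j \<le> k" "y = real j" using yin by auto
    have "poly q y = (\<Sum>r=0..k. if r = j then poly p (real r) else 0)"
    proof (unfold polyq, rule sum.cong[OF refl])
      fix r assume r: "r \<in> {0..k}"
      show "poly p (real r) * (\<Prod>m\<in>{0..k}-{r}. (y - real m)/(real r - real m)) =
            (if r = j then poly p (real r) else 0)"
      proof (cases "r = j")
        case True
        have "\<forall>m\<in>{0..k}-{r}. (y - real m)/(real r - real m) = 1" using j True by simp
        then have "(\<Prod>m\<in>{0..k}-{r}. (y - real m)/(real r - real m)) = 1" by (rule prod.neutral)
        then show ?thesis using True by simp
      next
        case False
        have "(\<Prod>m\<in>{0..k}-{r}. (y - real m)/(real r - real m)) = 0"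
          proof (rule prod_zero)
          show "\<exists>m\<in>{0..k}-{r}. (y - real m)/(real r - real m) = 0"
            using j False by (intro bexI[of _ j]) auto
        qed simp
        then show ?thesis using False by simp
      qed
    qed
    also have "\<dots> = poly p y" using j by (simp add: sum.delta)
    finally show ?thesis by simp
  qed
  have cardk: "card (real ` {0..k}) = Suc k" by (subst card_image) (auto simp: inj_on_def)
  have "p = q"
  proof (rule poly_eqI_degree[where A="real ` {0..k}"])
    fix x assume "x \<in> real ` {0..k}" then show "poly p x = poly q x" by (rule nodes)
  next
    show "degree p < card (real ` {0..k})" unfolding cardk using assms by simp
  next
    show "degree q < card (real ` {0..k})" unfolding cardk using degq by simp
  qed
  then have "poly p x = poly q x" by simp
  then show ?thesis by (simp only: polyq)
qed



lemma numprod: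
  assumes "k \<le> j"
  shows "(\<Prod>m\<in>{0..k}. (real j - real m)) = fact k * real (j choose k) * (real j - real k)"
  using assms
proof (induction k)
  case 0 then show ?case by simp
next
  case (Suc k)
  have e: "Suc k * (j choose Suc k) = (j - k) * (j choose k)"
    using binomial_absorption[of k j] binomial_absorb_comp[of j k] by simp
  have e2: "real (Suc k) * real (j choose Suc k) = (real j - real k) * real (j choose k)"
    using arg_cong[OF e, of real] Suc.prems by (simp add: of_nat_diff algebra_simps)
  have "(\<Prod>m\<in>{0..Suc k}. (real j - real m)) = (\<Prod>m\<in>{0..k}. (real j - real m)) * (real j - real (Suc k))"
    by (simp add: atLeast0_atMost_Suc mult.commute)
  also have "\<dots> = fact k * ((real j - real k) * real (j choose k)) * (real j - real (Suc k))"
    using Suc by simp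
  also have "\<dots> = fact k * (real (Suc k) * real (j choose Suc k)) * (real j - real (Suc k))"
    by (simp only: e2)
  also have "\<dots> = fact (Suc k) * real (j choose Suc k) * (real j - real (Suc k))"
    by (simp add: algebra_simps)
  finally show ?case .
qed

lemma denprod_base: "(\<Prod>m\<in>{0..<r}. (real r - real m)) = fact r"
proof -
  have "(fact r :: real) = real (\<Prod>i = 0..<r. r - i)" by (rule fact_prod_rev)
  also have "\<dots> = (\<Prod>i = 0..<r. real (r - i))" by (rule of_nat_prod)
  also have "\<dots> = (\<Prod>m\<in>{0..<r}. (real r - real m))"
    by (rule prod.cong) (auto simp: of_nat_diff)
  finally show ?thesis by simp
qed

lemma denprod:
  assumes "r \<le> k"
  shows "(\<Prod>m\<in>{0..k}-{r}. (real r - real m)) = (-1)^(k-r) * fact r * fact (k-r)"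
  using assms
proof (induction k rule: dec_induct)
  case base
  have "{0..r}-{r} = {0..<r}" by auto
  then show ?case by (simp add: denprod_base)
next
  case (step k)
  have "{0..Suc k}-{r} = insert (Suc k) ({0..k}-{r})" using step by auto
  then have "(\<Prod>m\<in>{0..Suc k}-{r}. (real r - real m)) = (real r - real (Suc k)) * (\<Prod>m\<in>{0..k}-{r}. (real r - real m))"
    by simp
  also have "\<dots> = (real r - real (Suc k)) * ((-1)^(k-r) * fact r * fact (k-r))" using step by simp
  also have "\<dots> = (-1)^(Suc k-r) * fact r * fact (Suc k-r)"
  proof -
    have "Suc k - r = Suc (k - r)" using step by simp
    moreover have "real r - real (Suc k) = - real (Suc (k-r))" using step by (simp add: of_nat_diff)
    ultimately show ?thesis by (simp add: algebra_simps)
  qed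
  finally show ?case .
qed

lemma basis_eval:
  assumes "r \<le> k" "k < j"
  shows "(\<Prod>m\<in>{0..k}-{r}. (real j - real m)/(real r - real m))
       = (-1)^(k-r) * real (j choose k) * real (k choose r) * ((real j - real k)/(real j - real r))"
proof -
  have jr: "real j - real r \<noteq> 0" using assms by simp
  have "(\<Prod>m\<in>{0..k}. (real j - real m)) = (real j - real r) * (\<Prod>m\<in>{0..k}-{r}. (real j - real m))"
    using assms by (subst prod.remove[of _ r]) auto
  then have num: "(\<Prod>m\<in>{0..k}-{r}. (real j - real m)) = fact k * real (j choose k) * (real j - real k) / (real j - real r)"
    using numprod[of k j] assms jr by (simp add: field_simps)
  have bin: "real (k choose r) = fact k / (fact r * fact (k - r))"
    using assms by (simp add: binomial_fact)
  have fnz: "(fact r :: real) \<noteq> 0" "(fact (k-r) :: real) \<noteq> 0" by auto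
  have sq: "((-1::real)^(k-r)) * (-1)^(k-r) = 1"
    by (simp add: power_mult_distrib[symmetric])
  show ?thesis
    unfolding prod_dividef num denprod[OF assms(1)] bin
    using jr fnz sq by (simp add: field_simps)
qed



lemma prod_choose: "(\<Prod>i=0..<s. real r - real i) = fact s * real (r choose s)"
proof -
  have "real (r choose s) = (\<Prod>i=0..<s. real r - real i) / fact s"
    by (simp add: binomial_gbinomial gbinomial_prod_rev)
  then show ?thesis by simp
qed

lemma deg_prod_lin: "degree (\<Prod>m\<in>{0..<s}. [:a m, b m:] :: real poly) \<le> s"
proof -
  have "degree (\<Prod>m\<in>{0..<s}. [:a m, b m:] :: real poly) \<le> sum (degree \<circ> (\<lambda>m. [:a m, b m:] :: real poly)) {0..<s}"
    by (rule degree_prod_sum_le) simp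
  also have "\<dots> \<le> sum (\<lambda>_. 1) {0..<s}" by (rule sum_mono) simp
  finally show ?thesis by simp
qed

lemma Ppoly:
  assumes "s \<le> k"
  shows "\<exists>P::real poly. degree P \<le> k \<and>
           (\<forall>r\<le>n. poly P (real r) = real (r choose s) * real ((n-r) choose (k-s)))"
proof -
  define P where "P = smult (1/(fact s * fact (k-s))) ((\<Prod>m\<in>{0..<s}. [:-real m, 1:]) * (\<Prod>m\<in>{0..<k-s}. [:real n - real m, -1:]))"
  have "degree P \<le> degree ((\<Prod>m\<in>{0..<s}. [:-real m, 1:]) * (\<Prod>m\<in>{0..<k-s}. [:real n - real m, -1:]) :: real poly)"
    unfolding P_def by (rule degree_smult_le)
  also have "\<dots> \<le> degree (\<Prod>m\<in>{0..<s}. [:-real m, 1:] :: real poly) + degree (\<Prod>m\<in>{0..<k-s}. [:real n - real m, -1:] :: real poly)"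
    by (rule degree_mult_le)
  also have "\<dots> \<le> s + (k - s)" by (intro add_mono deg_prod_lin)
  also have "\<dots> = k" using assms by simp
  finally have d: "degree P \<le> k" .
  have v: "poly P (real r) = real (r choose s) * real ((n-r) choose (k-s))" if "r \<le> n" for r
  proof -
    have a: "(\<Prod>m\<in>{0..<s}. real r - real m) = fact s * real (r choose s)" by (rule prod_choose)
    have "(\<Prod>m\<in>{0..<k-s}. real n - real m - real r) = (\<Prod>m\<in>{0..<k-s}. real (n-r) - real m)"
      using that by (intro prod.cong) (auto simp: of_nat_diff)
    also have "\<dots> = fact (k-s) * real ((n-r) choose (k-s))" by (rule prod_choose)
    finally have b: "(\<Prod>m\<in>{0..<k-s}. real n - real m - real r) = fact (k-s) * real ((n-r) choose (k-s))" .
    have "poly P (real r) = (\<Prod>m\<in>{0..<s}. real r - real m) * (\<Prod>m\<in>{0..<k-s}. real n - real m - real r) / (fact s * fact (k-s))"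
      by (simp add: P_def poly_prod algebra_simps)
    also have "\<dots> = real (r choose s) * real ((n-r) choose (k-s))"
      unfolding a b by simp
    finally show ?thesis .
  qed
  show ?thesis using d v by blast
qed


lemma choose_sym2:
  assumes "a \<le> N" "b \<le> N"
  shows "(N choose a) * ((N - a) choose b) = (N choose b) * ((N - b) choose a)"
proof (cases "a + b \<le> N")
  case True
  have 1: "(N choose (a+b)) * ((a+b) choose a) = (N choose a) * ((N - a) choose b)"
    using choose_mult[of a "a+b" N] True by simp
  have 2: "(N choose (a+b)) * ((a+b) choose b) = (N choose b) * ((N - b) choose a)"
    using choose_mult[of b "a+b" N] True by simp
  have "((a+b) choose a) = ((a+b) choose b)"
    using binomial_symmetric[of a "a+b"] by simp
  then show ?thesis using 1 2 by simp
next
  case False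
  then have "N - a < b" "N - b < a" using assms by auto
  then show ?thesis by (simp add: binomial_eq_0)
qed

lemma choose_triple:
  assumes "s \<le> k" "k \<le> n" "s \<le> i" "i \<le> n"
  shows "(n choose k) * (k choose s) * ((n-k) choose (i-s)) = (n choose i) * (i choose s) * ((n-i) choose (k-s))"
proof -
  have a: "(n choose k) * (k choose s) = (n choose s) * ((n-s) choose (k-s))"
    using choose_mult[of s k n] assms by simp
  have b: "(n choose i) * (i choose s) = (n choose s) * ((n-s) choose (i-s))"
    using choose_mult[of s i n] assms by simp
  have c: "((n-s) choose (k-s)) * ((n-s-(k-s)) choose (i-s)) = ((n-s) choose (i-s)) * ((n-s-(i-s)) choose (k-s))"
    using choose_sym2[of "k-s" "n-s" "i-s"] assms by simp
  have d1: "n-s-(k-s) = n-k" and d2: "n-s-(i-s) = n-i" using assms by auto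
  show ?thesis unfolding mult.assoc a b using c unfolding d1 d2 by (simp add: mult.assoc)
qed

lemma W_eq:
  assumes "s \<le> k" "k \<le> n" "i \<le> n"
  shows "real (k choose s) * real (binom_int (n-k) (int i - int s)) / real (n choose i)
       = real (i choose s) * real ((n-i) choose (k-s)) / real (n choose k)"
proof (cases "s \<le> i")
  case True
  have bi: "binom_int (n-k) (int i - int s) = (n-k) choose (i-s)"
    using True by (simp add: binom_int_def nat_diff_distrib)
  have "real ((n choose k) * (k choose s) * ((n-k) choose (i-s))) = real ((n choose i) * (i choose s) * ((n-i) choose (k-s)))"
    using choose_triple[OF assms(1,2) True assms(3)] by simp
  then have e: "real (n choose k) * real (k choose s) * real ((n-k) choose (i-s)) = real (n choose i) * real (i choose s) * real ((n-i) choose (k-s))"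
    by simp
  have nz: "real (n choose k) \<noteq> 0" "real (n choose i) \<noteq> 0" using assms by auto
  show ?thesis unfolding bi using e nz by (simp add: field_simps)
next
  case False
  then show ?thesis by (simp add: binom_int_def binomial_eq_0)
qed

lemma key:
  assumes "s \<le> k" "k < j" "j \<le> n"
  shows "real (j choose s) * real ((n-j) choose (k-s)) +
     (\<Sum>r=0..k. ((-1) ^ (k - r + 1) * real (j choose k) * real (k choose r) * ((real j - real k) / (real j - real r)))
        * (real (r choose s) * real ((n-r) choose (k-s)))) = 0"
proof -
  obtain P :: "real poly" where P: "degree P \<le> k" "\<And>r. r \<le> n \<Longrightarrow> poly P (real r) = real (r choose s) * real ((n-r) choose (k-s))"
    using Ppoly[OF assms(1), of n] by blast
  have "poly P (real j) = (\<Sum>r=0..k. poly P (real r) * (\<Prod>m\<in>{0..k}-{r}. (real j - real m)/(real r - real m)))"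
    by (rule lagrange_nat_nodes[OF P(1)])
  also have "\<dots> = (\<Sum>r=0..k. (real (r choose s) * real ((n-r) choose (k-s))) * ((-1)^(k-r) * real (j choose k) * real (k choose r) * ((real j - real k)/(real j - real r))))"
    using assms by (intro sum.cong refl) (simp add: P(2) basis_eval)
  finally have e: "real (j choose s) * real ((n-j) choose (k-s)) = \<dots>" using P(2) assms by simp
  have f: "(\<Sum>r=0..k. ((-1) ^ (k - r + 1) * real (j choose k) * real (k choose r) * ((real j - real k) / (real j - real r)))
        * (real (r choose s) * real ((n-r) choose (k-s))))
     = (\<Sum>r=0..k. - ((real (r choose s) * real ((n-r) choose (k-s))) * ((-1)^(k-r) * real (j choose k) * real (k choose r) * ((real j - real k)/(real j - real r)))))"
    by (intro sum.cong refl) (simp add: algebra_simps)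
  show ?thesis unfolding f e sum_negf by simp
qed

lemma sol:
  fixes t :: "nat \<Rightarrow> real"
  assumes "s \<le> k" "k \<le> n"
  defines "b \<equiv> \<lambda>r. if r \<le> k then (\<Sum>i=k+1..n. (-1) ^ (k - r + 1) * real (i choose k) * real (k choose r)
                          * ((real i - real k) / (real i - real r)) * t i) else t r"
  shows "(\<Sum>r=0..n. b r * (real (r choose s) * real ((n-r) choose (k-s)))) = 0"
proof -
  define Q where "Q r = real (r choose s) * real ((n-r) choose (k-s))" for r
  define c where "c i r = (-1) ^ (k - r + 1) * real (i choose k) * real (k choose r) * ((real i - real k) / (real i - real r))" for i r :: nat
  have split: "{0..n} = {0..k} \<union> {k+1..n}" using assms by auto
  have "(\<Sum>r=0..n. b r * Q r) = (\<Sum>r=0..k. b r * Q r) + (\<Sum>r=k+1..n. b r * Q r)"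
    unfolding split by (rule sum.union_disjoint) auto
  also have "(\<Sum>r=0..k. b r * Q r) = (\<Sum>r=0..k. \<Sum>i=k+1..n. c i r * t i * Q r)"
    by (intro sum.cong refl) (simp add: b_def c_def sum_distrib_right)
  also have "\<dots> = (\<Sum>i=k+1..n. t i * (\<Sum>r=0..k. c i r * Q r))"
    by (subst sum.swap) (simp add: sum_distrib_left algebra_simps)
  also have "\<dots> = (\<Sum>i=k+1..n. - (t i * Q i))"
  proof (intro sum.cong refl)
    fix i assume "i \<in> {k+1..n}"
    then have "Q i + (\<Sum>r=0..k. c i r * Q r) = 0"
      unfolding Q_def c_def using key[OF assms(1), of i n] by auto
    then have "(\<Sum>r=0..k. c i r * Q r) = - Q i" by linarith
    then show "t i * (\<Sum>r=0..k. c i r * Q r) = - (t i * Q i)" by simp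
  qed
  also have "(\<Sum>r=k+1..n. b r * Q r) = (\<Sum>i=k+1..n. t i * Q i)"
    by (intro sum.cong refl) (auto simp: b_def)
  finally show ?thesis by (simp add: Q_def sum_negf)
qed

lemma uniq:
  fixes d :: "nat \<Rightarrow> real"
  assumes "k \<le> n" "\<And>r. k < r \<Longrightarrow> r \<le> n \<Longrightarrow> d r = 0"
    and "\<And>s. s \<le> k \<Longrightarrow> (\<Sum>r=0..n. d r * (real (r choose s) * real ((n-r) choose (k-s)))) = 0"
  shows "\<forall>r. r \<le> k \<longrightarrow> d r = 0"
proof -
  have "\<forall>r. s \<le> r \<and> r \<le> k \<longrightarrow> d r = 0" if "s \<le> k+1" for s
    using that
  proof (induction s rule: inc_induct)
    case base then show ?case by auto
  next
    case (step s)
    have sk: "s \<le> k" using step by simp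
    have "(\<Sum>r=0..n. d r * (real (r choose s) * real ((n-r) choose (k-s))))
        = d s * (real (s choose s) * real ((n-s) choose (k-s))) + (\<Sum>r\<in>{0..n}-{s}. d r * (real (r choose s) * real ((n-r) choose (k-s))))"
      using sk assms(1) by (subst sum.remove[of _ s]) auto
    also have "(\<Sum>r\<in>{0..n}-{s}. d r * (real (r choose s) * real ((n-r) choose (k-s)))) = 0"
    proof (rule sum.neutral, rule ballI)
      fix r assume r: "r \<in> {0..n}-{s}"
      show "d r * (real (r choose s) * real ((n-r) choose (k-s))) = 0"
      proof (cases "r < s")
        case True then show ?thesis by (simp add: binomial_eq_0)
      next
        case False
        then have "s < r" using r by auto
        then show ?thesis using step.IH assms(2) r by (cases "r \<le> k") auto
      qed
    qed
    finally have "d s * (real ((n-s) choose (k-s))) = 0" using assms(3)[OF sk] by simp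
    moreover have "real ((n-s) choose (k-s)) \<noteq> 0" using sk assms(1) by simp
    ultimately have "d s = 0" by simp
    then show ?case using step.IH by (metis Suc_leI le_neq_implies_less)
  qed
  then show ?thesis by auto
qed

lemma eqv:
  fixes a lam :: "nat \<Rightarrow> real"
  assumes "s \<le> k" "k \<le> n"
  shows "(\<Sum>i=0..n. a i * (real (k choose s) * real (binom_int (n - k) (int i - int s)) / real (n choose i)))
           = (\<Sum>i=0..n. lam i * (real (k choose s) * real (binom_int (n - k) (int i - int s)) / real (n choose i)))
     \<longleftrightarrow> (\<Sum>i=0..n. (a i - lam i) * (real (i choose s) * real ((n-i) choose (k-s)))) = 0"
proof -
  have g: "(\<Sum>i=0..n. f i * (real (k choose s) * real (binom_int (n - k) (int i - int s)) / real (n choose i)))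
       = (\<Sum>i=0..n. f i * (real (i choose s) * real ((n-i) choose (k-s)))) / real (n choose k)" for f :: "nat \<Rightarrow> real"
    unfolding sum_divide_distrib
  proof (intro sum.cong refl)
    fix i assume "i \<in> {0..n}"
    then have i: "i \<le> n" by simp
    show "f i * (real (k choose s) * real (binom_int (n - k) (int i - int s)) / real (n choose i))
       = f i * (real (i choose s) * real ((n-i) choose (k-s))) / real (n choose k)"
      by (simp only: W_eq[OF assms i]) simp
  qed
  have nz: "real (n choose k) \<noteq> 0" using assms by simp
  show ?thesis unfolding g using nz
    by (simp add: left_diff_distrib sum_subtractf divide_simps)
qed

theorem mainTheorem16:
  fixes n k :: nat and lam :: "nat \<Rightarrow> real"
  assumes "1 \<le> k" and "k \<le> n"
  shows "\<forall>a :: nat \<Rightarrow> real.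
    (\<forall>s\<le>k. (\<Sum>i=0..n. a i * (real (k choose s) * real (binom_int (n - k) (int i - int s)) / real (n choose i)))
           = (\<Sum>i=0..n. lam i * (real (k choose s) * real (binom_int (n - k) (int i - int s)) / real (n choose i))))
    \<longleftrightarrow>
    (\<exists>t :: nat \<Rightarrow> real.
       (\<forall>r\<le>k. a r = (\<Sum>i=k+1..n. (-1) ^ (k - r + 1) * real (i choose k) * real (k choose r)
                          * ((real i - real k) / (real i - real r)) * t i) + lam r)
     \<and> (\<forall>r. k + 1 \<le> r \<and> r \<le> n \<longrightarrow> a r = t r + lam r))"
  proof (rule allI, rule iffI)
  fix a :: "nat \<Rightarrow> real"
  assume L: "(\<forall>s\<le>k. (\<Sum>i=0..n. a i * (real (k choose s) * real (binom_int (n - k) (int i - int s)) / real (n choose i)))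
           = (\<Sum>i=0..n. lam i * (real (k choose s) * real (binom_int (n - k) (int i - int s)) / real (n choose i))))"
    define t where "t r = a r - lam r" for r
    define b where "b = (\<lambda>r. if r \<le> k then (\<Sum>i=k+1..n. (-1) ^ (k - r + 1) * real (i choose k) * real (k choose r)
                          * ((real i - real k) / (real i - real r)) * t i) else t r)"
    define d where "d r = (a r - lam r) - b r" for r
    have "\<forall>r. r \<le> k \<longrightarrow> d r = 0"
    proof (rule uniq[OF assms(2)])
      fix r assume "k < r" "r \<le> n" then show "d r = 0" by (simp add: d_def b_def t_def)
    next
      fix s assume s: "s \<le> k"
      have 1: "(\<Sum>i=0..n. (a i - lam i) * (real (i choose s) * real ((n-i) choose (k-s)))) = 0"
        using L s eqv[OF s assms(2), of a lam] by auto
      have 2: "(\<Sum>r=0..n. b r * (real (r choose s) * real ((n-r) choose (k-s)))) = 0"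
        unfolding b_def by (rule sol[OF s assms(2)])
      show "(\<Sum>r=0..n. d r * (real (r choose s) * real ((n-r) choose (k-s)))) = 0"
        using 1 2 by (simp add: d_def left_diff_distrib sum_subtractf)
    qed
    then show "\<exists>t :: nat \<Rightarrow> real.
       (\<forall>r\<le>k. a r = (\<Sum>i=k+1..n. (-1) ^ (k - r + 1) * real (i choose k) * real (k choose r)
                          * ((real i - real k) / (real i - real r)) * t i) + lam r)
     \<and> (\<forall>r. k + 1 \<le> r \<and> r \<le> n \<longrightarrow> a r = t r + lam r)"
      by (intro exI[of _ t]) (auto simp: d_def b_def t_def)
  next
    fix a :: "nat \<Rightarrow> real"
    assume "\<exists>t :: nat \<Rightarrow> real.
       (\<forall>r\<le>k. a r = (\<Sum>i=k+1..n. (-1) ^ (k - r + 1) * real (i choose k) * real (k choose r)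
                          * ((real i - real k) / (real i - real r)) * t i) + lam r)
     \<and> (\<forall>r. k + 1 \<le> r \<and> r \<le> n \<longrightarrow> a r = t r + lam r)"
    then obtain t where t1: "\<forall>r\<le>k. a r = (\<Sum>i=k+1..n. (-1) ^ (k - r + 1) * real (i choose k) * real (k choose r)
                          * ((real i - real k) / (real i - real r)) * t i) + lam r"
      and t2: "\<forall>r. k + 1 \<le> r \<and> r \<le> n \<longrightarrow> a r = t r + lam r" by blast
    show "(\<forall>s\<le>k. (\<Sum>i=0..n. a i * (real (k choose s) * real (binom_int (n - k) (int i - int s)) / real (n choose i)))
           = (\<Sum>i=0..n. lam i * (real (k choose s) * real (binom_int (n - k) (int i - int s)) / real (n choose i))))"
    proof (intro allI impI)
      fix s assume s: "s \<le> k"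
      have "(\<Sum>i=0..n. (a i - lam i) * (real (i choose s) * real ((n-i) choose (k-s))))
          = (\<Sum>r=0..n. (if r \<le> k then (\<Sum>i=k+1..n. (-1) ^ (k - r + 1) * real (i choose k) * real (k choose r)
                          * ((real i - real k) / (real i - real r)) * t i) else t r) * (real (r choose s) * real ((n-r) choose (k-s))))"
        using t1 t2 by (intro sum.cong refl) auto
      also have "\<dots> = 0" by (rule sol[OF s assms(2)])
      finally show "(\<Sum>i=0..n. a i * (real (k choose s) * real (binom_int (n - k) (int i - int s)) / real (n choose i)))
           = (\<Sum>i=0..n. lam i * (real (k choose s) * real (binom_int (n - k) (int i - int s)) / real (n choose i)))"
        using eqv[OF s assms(2), of a lam] by simp
    qed
qed

end
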